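(* Let $G$ be a $K_3$-free graph and let $P=X_PY_P$ and $Q=X_QY_Q$ be two bicliques of $G$ that are not mutually included and satisfy $X_P\cap X_Q\neq\emptyset$. Then there is a biclique $R=X_RY_R$ of $G$ with $X_R=X_P\cap X_Q$ and $Y_R\supseteq Y_P\cup Y_Q$.
   Context: All graphs are finite and simple. A biclique of a graph $G$ is a set $P\subseteq V(G)$ such that the induced subgraph $G[P]$ is a complete bipartite graph with both parts nonempty, and $P$ is inclusion-maximal with this property. Since $G[P]$ is connected, its bipartition into two nonempty independent sets $X,Y$ (every vertex of $X$ adjacent to every vertex of $Y$) is unique; we write $P=XY$ to mean $P=X\cup Y$ with $X,Y$ these two parts, called the sides of $P$. Two bicliques $P,Q$ of $G$ are mutually included if their sides can be named $P=X_PY_P$, $Q=X_QY_Q$ so that $X_Q\subsetneq X_P$ and $Y_P\subsetneq Y_Q$. *)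

theory Defs
  imports Main
begin

definition simple_graph :: "'a set \<Rightarrow> ('a \<Rightarrow> 'a \<Rightarrow> bool) \<Rightarrow> bool" where
  "simple_graph V E \<longleftrightarrow> finite V \<and> (\<forall>x y. E x y \<longrightarrow> x \<in> V \<and> y \<in> V)
     \<and> (\<forall>x y. E x y \<longrightarrow> E y x) \<and> (\<forall>x. \<not> E x x)"

definition K3_free :: "'a set \<Rightarrow> ('a \<Rightarrow> 'a \<Rightarrow> bool) \<Rightarrow> bool" where
  "K3_free V E \<longleftrightarrow> \<not> (\<exists>x\<in>V. \<exists>y\<in>V. \<exists>z\<in>V. E x y \<and> E y z \<and> E x z)"

definition is_bipartition :: "('a \<Rightarrow> 'a \<Rightarrow> bool) \<Rightarrow> 'a set \<Rightarrow> 'a set \<Rightarrow> 'a set \<Rightarrow> bool" where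
  "is_bipartition E P X Y \<longleftrightarrow> P = X \<union> Y \<and> X \<inter> Y = {} \<and> X \<noteq> {} \<and> Y \<noteq> {}
     \<and> (\<forall>x\<in>X. \<forall>x'\<in>X. \<not> E x x') \<and> (\<forall>y\<in>Y. \<forall>y'\<in>Y. \<not> E y y')
     \<and> (\<forall>x\<in>X. \<forall>y\<in>Y. E x y)"

definition complete_bipartite_set :: "('a \<Rightarrow> 'a \<Rightarrow> bool) \<Rightarrow> 'a set \<Rightarrow> bool" where
  "complete_bipartite_set E P \<longleftrightarrow> (\<exists>X Y. is_bipartition E P X Y)"

definition biclique :: "'a set \<Rightarrow> ('a \<Rightarrow> 'a \<Rightarrow> bool) \<Rightarrow> 'a set \<Rightarrow> bool" where
  "biclique V E P \<longleftrightarrow> P \<subseteq> V \<and> complete_bipartite_set E P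
     \<and> (\<forall>P'. P \<subseteq> P' \<and> P' \<subseteq> V \<and> complete_bipartite_set E P' \<longrightarrow> P' = P)"

definition mutually_included :: "'a set \<Rightarrow> ('a \<Rightarrow> 'a \<Rightarrow> bool) \<Rightarrow> 'a set \<Rightarrow> 'a set \<Rightarrow> bool" where
  "mutually_included V E P Q \<longleftrightarrow> biclique V E P \<and> biclique V E Q \<and>
     (\<exists>XP YP XQ YQ. is_bipartition E P XP YP \<and> is_bipartition E Q XQ YQ
        \<and> XQ \<subset> XP \<and> YP \<subset> YQ)"

end

theory Submission
  imports Defs
begin

lemma common_nb_in_X:
  assumes g: "simple_graph V E" and k: "K3_free V E"
    and b: "biclique V E P" and bp: "is_bipartition E P X Y"
    and z: "\<forall>y\<in>Y. E y z"
  shows "z \<in> X"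
proof -
  from bp obtain y0 where y0: "y0 \<in> Y" unfolding is_bipartition_def by blast
  have zV: "z \<in> V" using g z y0 unfolding simple_graph_def by blast
  have zY: "z \<notin> Y" using bp z g unfolding is_bipartition_def simple_graph_def by blast
  have PV: "P \<subseteq> V" using b unfolding biclique_def by blast
  have ind: "\<forall>x\<in>insert z X. \<forall>x'\<in>insert z X. \<not> E x x'"
  proof (intro ballI)
    fix x x' assume xx: "x \<in> insert z X" "x' \<in> insert z X"
    show "\<not> E x x'"
    proof
      assume e: "E x x'"
      have "x \<noteq> z \<or> x' \<noteq> z" using e g unfolding simple_graph_def by auto
      moreover have "\<not> (x \<in> X \<and> x' \<in> X)" using e bp unfolding is_bipartition_def by blast
      ultimately have "(x = z \<and> x' \<in> X) \<or> (x' = z \<and> x \<in> X)" using xx by auto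
      moreover have sy: "\<And>u v. E u v \<Longrightarrow> E v u" using g unfolding simple_graph_def by blast
      ultimately obtain a where a: "a \<in> X" "E a z" using e by blast
      have "E a y0" "E y0 z" using a bp y0 z unfolding is_bipartition_def by auto
      moreover have "a \<in> V" "y0 \<in> V" using a y0 bp PV unfolding is_bipartition_def by auto
      ultimately show False using k a zV unfolding K3_free_def by blast
    qed
  qed
  have "is_bipartition E (insert z P) (insert z X) Y"
    using bp ind zY z g unfolding is_bipartition_def simple_graph_def by auto
  hence "complete_bipartite_set E (insert z P)" unfolding complete_bipartite_set_def by blast
  moreover have "insert z P \<subseteq> V" using PV zV by auto
  ultimately have "insert z P = P" using b unfolding biclique_def by blast
  thus ?thesis using bp zY unfolding is_bipartition_def by auto
qed

lemma bip_sym: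
  assumes "simple_graph V E" "is_bipartition E P X Y"
  shows "is_bipartition E P Y X"
proof -
  have sy: "\<And>u v. E u v \<Longrightarrow> E v u" using assms(1) unfolding simple_graph_def by blast
  show ?thesis using assms(2) sy unfolding is_bipartition_def by (simp add: Un_commute Int_commute)
qed

theorem lemma1:
  fixes V :: "'a set" and E :: "'a \<Rightarrow> 'a \<Rightarrow> bool"
    and P Q XP YP XQ YQ :: "'a set"
  assumes "simple_graph V E"
    and "K3_free V E"
    and "biclique V E P" and "is_bipartition E P XP YP"
    and "biclique V E Q" and "is_bipartition E Q XQ YQ"
    and "\<not> mutually_included V E P Q"
    and "XP \<inter> XQ \<noteq> {}"
  shows "\<exists>R YR. biclique V E R \<and> is_bipartition E R (XP \<inter> XQ) YR \<and> YP \<union> YQ \<subseteq> YR"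
proof -
  note g = assms(1) and k = assms(2)
  define XR where "XR = XP \<inter> XQ"
  define YR where "YR = {z. \<forall>x\<in>XR. E x z}"
  define R where "R = XR \<union> YR"
  from assms(8) obtain x0 where x0: "x0 \<in> XR" unfolding XR_def by blast
  have sub: "YP \<union> YQ \<subseteq> YR" using assms(4,6) unfolding YR_def XR_def is_bipartition_def by blast
  have PV: "P \<subseteq> V" "Q \<subseteq> V" using assms(3,5) unfolding biclique_def by auto
  have x0V: "x0 \<in> V" using x0 PV assms(4) unfolding XR_def is_bipartition_def by blast
  have YRV: "YR \<subseteq> V" using x0 g unfolding YR_def simple_graph_def by blast
  have XRV: "XR \<subseteq> V" using PV assms(4) unfolding XR_def is_bipartition_def by blast
  have YRind: "\<forall>y\<in>YR. \<forall>y'\<in>YR. \<not> E y y'"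
  proof (intro ballI notI)
    fix y y' assume yy: "y \<in> YR" "y' \<in> YR" "E y y'"
    have "E x0 y" "E x0 y'" using yy x0 unfolding YR_def by auto
    moreover have "y \<in> V" "y' \<in> V" using yy YRV by auto
    ultimately show False using k x0V yy(3) unfolding K3_free_def by blast
  qed
  have XRind: "\<forall>x\<in>XR. \<forall>x'\<in>XR. \<not> E x x'"
    using assms(4) unfolding XR_def is_bipartition_def by blast
  have YPne: "YP \<noteq> {}" using assms(4) unfolding is_bipartition_def by blast
  have disj: "XR \<inter> YR = {}" using g unfolding YR_def simple_graph_def by blast
  have YRne: "YR \<noteq> {}" using YPne sub by blast
  have XRne: "XR \<noteq> {}" using x0 by blast
  have cross: "\<forall>x\<in>XR. \<forall>y\<in>YR. E x y" unfolding YR_def by blast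
  have bipR: "is_bipartition E R XR YR"
    unfolding is_bipartition_def R_def using YRne XRne disj XRind YRind cross by simp
  have NY: "\<And>z. \<forall>y\<in>YR. E y z \<Longrightarrow> z \<in> XR"
  proof -
    fix z assume z: "\<forall>y\<in>YR. E y z"
    have "z \<in> XP" using common_nb_in_X[OF g k assms(3,4)] z sub by blast
    moreover have "z \<in> XQ" using common_nb_in_X[OF g k assms(5,6)] z sub by blast
    ultimately show "z \<in> XR" unfolding XR_def by blast
  qed
  obtain y0 where y0: "y0 \<in> YR" using YPne sub by blast
  have e0: "E x0 y0" using x0 y0 unfolding YR_def by blast
  have max: "\<forall>P'. R \<subseteq> P' \<and> P' \<subseteq> V \<and> complete_bipartite_set E P' \<longrightarrow> P' = R"
  proof (intro allI impI)
    fix P' assume h: "R \<subseteq> P' \<and> P' \<subseteq> V \<and> complete_bipartite_set E P'"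
    then obtain X' Y' where b': "is_bipartition E P' X' Y'" unfolding complete_bipartite_set_def by blast
    have gen: "P' = R" if bb: "is_bipartition E P' A B" and a: "x0 \<in> A" for A B
    proof -
      have "y0 \<notin> A" using bb a e0 unfolding is_bipartition_def by blast
      hence yB: "y0 \<in> B" using bb h y0 unfolding is_bipartition_def R_def by blast
      have XA: "XR \<subseteq> A"
      proof
        fix x assume x: "x \<in> XR"
        have "E x y0" using x y0 unfolding YR_def by blast
        hence "x \<notin> B" using bb yB unfolding is_bipartition_def by blast
        thus "x \<in> A" using bb h x unfolding is_bipartition_def R_def by blast
      qed
      have YB: "YR \<subseteq> B"
      proof
        fix y assume y: "y \<in> YR"
        have "E x0 y" using x0 y unfolding YR_def by blast
        hence "y \<notin> A" using bb a unfolding is_bipartition_def by blast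
        thus "y \<in> B" using bb h y unfolding is_bipartition_def R_def by blast
      qed
      have "B \<subseteq> YR" using bb XA unfolding is_bipartition_def YR_def by blast
      moreover have "A \<subseteq> XR"
      proof
        fix z assume zA: "z \<in> A"
        have sy: "\<And>u v. E u v \<Longrightarrow> E v u" using g unfolding simple_graph_def by blast
        have "\<forall>a\<in>A. \<forall>b\<in>B. E a b" using bb unfolding is_bipartition_def by blast
        hence "\<forall>y\<in>YR. E y z" using zA YB sy by blast
        thus "z \<in> XR" by (rule NY)
      qed
      moreover have "P' = A \<union> B" using bb unfolding is_bipartition_def by blast
      ultimately show ?thesis using XA YB unfolding R_def by blast
    qed
    have "x0 \<in> X' \<or> x0 \<in> Y'" using b' h x0 unfolding is_bipartition_def R_def by blast
    thus "P' = R" using gen b' bip_sym[OF g b'] by blast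
  qed
  have "complete_bipartite_set E R" unfolding complete_bipartite_set_def using bipR by blast
  moreover have "R \<subseteq> V" using XRV YRV R_def by blast
  ultimately have "biclique V E R" unfolding biclique_def using max by blast
  thus ?thesis using bipR sub unfolding XR_def by blast
qed

end
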